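(* Every Sasakian Lie algebroid is $K$-contact; that is, if $E$ is a contact Riemannian Lie algebroid whose associated almost contact Riemannian structure $(F_E,\xi,\eta,g_E)$ is normal, then $\xi$ is a Killing section of $g_E$.
   Context: A Lie algebroid $(E,\rho_E,[\cdot,\cdot]_E)$ over $M$ is a vector bundle with anchor $\rho_E:E\to TM$ and Lie bracket on $\Gamma(E)$ with $[s_1,fs_2]_E=f[s_1,s_2]_E+\rho_E(s_1)(f)s_2$. For a 1-form $\eta$, $(d_E\eta)(s_1,s_2)=\frac12\{\rho_E(s_1)(\eta(s_2))-\rho_E(s_2)(\eta(s_1))-\eta([s_1,s_2]_E)\}$. For $E$ of rank $2m+1$, an almost contact Riemannian structure $(F_E,\xi,\eta,g_E)$: endomorphism $F_E$, $\xi\in\Gamma(E)$, $\eta\in\Gamma(E^* )$, bundle metric $g_E$ with $F_E^2=-I_E+\eta\otimes\xi$, $\eta(\xi)=1$, $g_E(F_Es_1,F_Es_2)=g_E(s_1,s_2)-\eta(s_1)\eta(s_2)$; fundamental form $\Omega_E(s_1,s_2)=g_E(s_1,F_Es_2)$. $E$ is contact Riemannian if also $\eta\wedge(d_E\eta)^m$ vanishes nowhere and $d_E\eta=\Omega_E$. The structure is normal if $N_{F_E}+2\,d_E\eta\otimes\xi=0$, where $N_{F_E}(s_1,s_2)=[F_Es_1,F_Es_2]_E-F_E[F_Es_1,s_2]_E-F_E[s_1,F_Es_2]_E+F_E^2[s_1,s_2]_E$. A Sasakian Lie algebroid is a contact Riemannian Lie algebroid whose structure is normal. $\xi$ is Killing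 if $\rho_E(\xi)(g_E(s_1,s_2))-g_E([\xi,s_1]_E,s_2)-g_E(s_1,[\xi,s_2]_E)=0$ for all $s_1,s_2$; $K$-contact means contact Riemannian with $\xi$ Killing. *)

theory Defs
  imports "HOL-Analysis.Analysis"
begin

text \<open>Abstract model of a Lie algebroid over a manifold M (type 'm).
  Smooth functions: a set C of real functions on M.
  Vector bundle E: fibres E x, linear subspaces of an ambient real vector space 'e,
  with a set Gam of smooth sections (functions 'm => 'e with s x in E x).
  Anchor: rho s is the vector field rho_E(s), acting as a derivation on C.\<close>

definition lin_on :: "'a::real_vector set \<Rightarrow> ('a \<Rightarrow> 'b::real_vector) \<Rightarrow> bool" where
  "lin_on V f \<longleftrightarrow> (\<forall>u\<in>V. \<forall>v\<in>V. f (u + v) = f u + f v) \<and> (\<forall>c. \<forall>u\<in>V. f (c *\<^sub>R u) = c *\<^sub>R f u)"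

definition fmul :: "('m \<Rightarrow> real) \<Rightarrow> ('m \<Rightarrow> 'e::real_vector) \<Rightarrow> ('m \<Rightarrow> 'e)" where
  "fmul f s = (\<lambda>x. f x *\<^sub>R s x)"

definition lie_algebroid ::
  "('m \<Rightarrow> real) set \<Rightarrow> ('m \<Rightarrow> 'e::real_vector set) \<Rightarrow> ('m \<Rightarrow> 'e) set
   \<Rightarrow> (('m \<Rightarrow> 'e) \<Rightarrow> ('m \<Rightarrow> real) \<Rightarrow> ('m \<Rightarrow> real))
   \<Rightarrow> (('m \<Rightarrow> 'e) \<Rightarrow> ('m \<Rightarrow> 'e) \<Rightarrow> ('m \<Rightarrow> 'e)) \<Rightarrow> bool" where
  "lie_algebroid C E Gam rho br \<longleftrightarrow>
     \<comment> \<open>smooth functions form an algebra containing the constants\<close>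
     (\<forall>c. (\<lambda>x. c) \<in> C) \<and>
     (\<forall>f\<in>C. \<forall>h\<in>C. (\<lambda>x. f x + h x) \<in> C \<and> (\<lambda>x. f x * h x) \<in> C) \<and>
     \<comment> \<open>vector bundle: fibres are subspaces; sections form a C-module and span each fibre\<close>
     (\<forall>x. subspace (E x)) \<and>
     (\<forall>s\<in>Gam. \<forall>x. s x \<in> E x) \<and>
     (\<forall>x. \<forall>v\<in>E x. \<exists>s\<in>Gam. s x = v) \<and>
     (\<lambda>x. 0) \<in> Gam \<and>
     (\<forall>s\<in>Gam. \<forall>t\<in>Gam. (\<lambda>x. s x + t x) \<in> Gam) \<and>
     (\<forall>f\<in>C. \<forall>s\<in>Gam. fmul f s \<in> Gam) \<and>
     \<comment> \<open>anchor: rho s is a vector field (derivation of C), C-linear in s\<close>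
     (\<forall>s\<in>Gam. \<forall>f\<in>C. rho s f \<in> C) \<and>
     (\<forall>s\<in>Gam. \<forall>f\<in>C. \<forall>h\<in>C. rho s (\<lambda>x. f x + h x) = (\<lambda>x. rho s f x + rho s h x)) \<and>
     (\<forall>s\<in>Gam. \<forall>f\<in>C. \<forall>c. rho s (\<lambda>x. c * f x) = (\<lambda>x. c * rho s f x)) \<and>
     (\<forall>s\<in>Gam. \<forall>f\<in>C. \<forall>h\<in>C. rho s (\<lambda>x. f x * h x) = (\<lambda>x. f x * rho s h x + h x * rho s f x)) \<and>
     (\<forall>s\<in>Gam. \<forall>t\<in>Gam. \<forall>f\<in>C. rho (\<lambda>x. s x + t x) f = (\<lambda>x. rho s f x + rho t f x)) \<and>
     (\<forall>s\<in>Gam. \<forall>h\<in>C. \<forall>f\<in>C. rho (fmul h s) f = (\<lambda>x. h x * rho s f x)) \<and>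
     \<comment> \<open>Lie bracket on sections\<close>
     (\<forall>s\<in>Gam. \<forall>t\<in>Gam. br s t \<in> Gam) \<and>
     (\<forall>s\<in>Gam. \<forall>t\<in>Gam. \<forall>u\<in>Gam. br s (\<lambda>x. t x + u x) = (\<lambda>x. br s t x + br s u x)) \<and>
     (\<forall>s\<in>Gam. \<forall>t\<in>Gam. \<forall>c. br s (\<lambda>x. c *\<^sub>R t x) = (\<lambda>x. c *\<^sub>R br s t x)) \<and>
     (\<forall>s\<in>Gam. \<forall>t\<in>Gam. br s t = (\<lambda>x. - br t s x)) \<and>
     (\<forall>s\<in>Gam. \<forall>t\<in>Gam. \<forall>u\<in>Gam.
        (\<lambda>x. br s (br t u) x + br t (br u s) x + br u (br s t) x) = (\<lambda>x. 0)) \<and>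
     \<comment> \<open>Leibniz rule\<close>
     (\<forall>s\<in>Gam. \<forall>t\<in>Gam. \<forall>f\<in>C.
        br s (fmul f t) = (\<lambda>x. f x *\<^sub>R br s t x + rho s f x *\<^sub>R t x)) \<and>
     \<comment> \<open>the anchor preserves brackets (standard consequence, made explicit)\<close>
     (\<forall>s\<in>Gam. \<forall>t\<in>Gam. \<forall>f\<in>C.
        rho (br s t) f = (\<lambda>x. rho s (rho t f) x - rho t (rho s f) x))"

definition dE ::
  "(('m \<Rightarrow> 'e) \<Rightarrow> ('m \<Rightarrow> real) \<Rightarrow> ('m \<Rightarrow> real)) \<Rightarrow> (('m \<Rightarrow> 'e) \<Rightarrow> ('m \<Rightarrow> 'e) \<Rightarrow> ('m \<Rightarrow> 'e))
   \<Rightarrow> ('m \<Rightarrow> 'e \<Rightarrow> real) \<Rightarrow> ('m \<Rightarrow> 'e) \<Rightarrow> ('m \<Rightarrow> 'e) \<Rightarrow> ('m \<Rightarrow> real)" where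
  "dE rho br eta s1 s2 = (\<lambda>x. (1/2) * (rho s1 (\<lambda>y. eta y (s2 y)) x - rho s2 (\<lambda>y. eta y (s1 y)) x
                                        - eta x (br s1 s2 x)))"

definition fundamental_form ::
  "('m \<Rightarrow> 'e \<Rightarrow> 'e) \<Rightarrow> ('m \<Rightarrow> 'e \<Rightarrow> 'e \<Rightarrow> real) \<Rightarrow> ('m \<Rightarrow> 'e) \<Rightarrow> ('m \<Rightarrow> 'e) \<Rightarrow> ('m \<Rightarrow> real)" where
  "fundamental_form F g s1 s2 = (\<lambda>x. g x (s1 x) (F x (s2 x)))"

definition endo_sec :: "('m \<Rightarrow> 'e \<Rightarrow> 'e) \<Rightarrow> ('m \<Rightarrow> 'e) \<Rightarrow> ('m \<Rightarrow> 'e)" where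
  "endo_sec F s = (\<lambda>x. F x (s x))"

definition almost_contact_riemannian ::
  "('m \<Rightarrow> real) set \<Rightarrow> ('m \<Rightarrow> 'e::real_vector set) \<Rightarrow> ('m \<Rightarrow> 'e) set \<Rightarrow> nat
   \<Rightarrow> ('m \<Rightarrow> 'e \<Rightarrow> 'e) \<Rightarrow> ('m \<Rightarrow> 'e) \<Rightarrow> ('m \<Rightarrow> 'e \<Rightarrow> real) \<Rightarrow> ('m \<Rightarrow> 'e \<Rightarrow> 'e \<Rightarrow> real) \<Rightarrow> bool" where
  "almost_contact_riemannian C E Gam m F xi eta g \<longleftrightarrow>
     \<comment> \<open>rank 2m+1\<close>
     (\<forall>x. dim (E x) = 2 * m + 1) \<and>
     \<comment> \<open>F smooth bundle endomorphism\<close>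
     (\<forall>x. lin_on (E x) (F x) \<and> F x ` E x \<subseteq> E x) \<and>
     (\<forall>s\<in>Gam. endo_sec F s \<in> Gam) \<and>
     \<comment> \<open>xi smooth section, eta smooth 1-form\<close>
     xi \<in> Gam \<and>
     (\<forall>x. lin_on (E x) (eta x)) \<and>
     (\<forall>s\<in>Gam. (\<lambda>x. eta x (s x)) \<in> C) \<and>
     \<comment> \<open>g smooth bundle metric\<close>
     (\<forall>x. \<forall>u\<in>E x. lin_on (E x) (g x u)) \<and>
     (\<forall>x. \<forall>u\<in>E x. \<forall>v\<in>E x. g x u v = g x v u) \<and>
     (\<forall>x. \<forall>u\<in>E x. u \<noteq> 0 \<longrightarrow> g x u u > 0) \<and>
     (\<forall>s\<in>Gam. \<forall>t\<in>Gam. (\<lambda>x. g x (s x) (t x)) \<in> C) \<and>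
     \<comment> \<open>almost contact metric identities\<close>
     (\<forall>x. \<forall>v\<in>E x. F x (F x v) = - v + eta x v *\<^sub>R xi x) \<and>
     (\<forall>x. eta x (xi x) = 1) \<and>
     (\<forall>x. \<forall>u\<in>E x. \<forall>v\<in>E x. g x (F x u) (F x v) = g x u v - eta x u * eta x v)"

text \<open>(eta wedge (d_E eta)^m)(s_0,...,s_2m), up to a nonzero constant factor.\<close>
definition contact_volume ::
  "(('m \<Rightarrow> 'e) \<Rightarrow> ('m \<Rightarrow> real) \<Rightarrow> ('m \<Rightarrow> real)) \<Rightarrow> (('m \<Rightarrow> 'e) \<Rightarrow> ('m \<Rightarrow> 'e) \<Rightarrow> ('m \<Rightarrow> 'e))
   \<Rightarrow> ('m \<Rightarrow> 'e \<Rightarrow> real) \<Rightarrow> nat \<Rightarrow> (nat \<Rightarrow> ('m \<Rightarrow> 'e)) \<Rightarrow> ('m \<Rightarrow> real)" where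
  "contact_volume rho br eta m s = (\<lambda>x.
     \<Sum>p\<in>{p. p permutes {0..2*m}}. of_int (sign p) * eta x (s (p 0) x) *
        (\<Prod>i\<in>{1..m}. dE rho br eta (s (p (2*i - 1))) (s (p (2*i))) x))"

definition contact_riemannian_lie_algebroid where
  "contact_riemannian_lie_algebroid C E Gam rho br m F xi eta g \<longleftrightarrow>
     lie_algebroid C E Gam rho br \<and>
     almost_contact_riemannian C E Gam m F xi eta g \<and>
     \<comment> \<open>eta wedge (d_E eta)^m vanishes nowhere\<close>
     (\<forall>x. \<exists>s. (\<forall>i\<le>2*m. s i \<in> Gam) \<and> contact_volume rho br eta m s x \<noteq> 0) \<and>
     \<comment> \<open>d_E eta = Omega_E\<close>
     (\<forall>s1\<in>Gam. \<forall>s2\<in>Gam. dE rho br eta s1 s2 = fundamental_form F g s1 s2)"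

definition nijenhuis where
  "nijenhuis br F s1 s2 = (\<lambda>x.
     br (endo_sec F s1) (endo_sec F s2) x
     - F x (br (endo_sec F s1) s2 x)
     - F x (br s1 (endo_sec F s2) x)
     + F x (F x (br s1 s2 x)))"

definition normal_structure where
  "normal_structure Gam rho br F xi eta \<longleftrightarrow>
     (\<forall>s1\<in>Gam. \<forall>s2\<in>Gam.
        (\<lambda>x. nijenhuis br F s1 s2 x + (2 * dE rho br eta s1 s2 x) *\<^sub>R xi x) = (\<lambda>x. 0))"

definition sasakian_lie_algebroid where
  "sasakian_lie_algebroid C E Gam rho br m F xi eta g \<longleftrightarrow>
     contact_riemannian_lie_algebroid C E Gam rho br m F xi eta g \<and>
     normal_structure Gam rho br F xi eta"

definition killing_section where
  "killing_section Gam rho br g xi \<longleftrightarrow>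
     (\<forall>s1\<in>Gam. \<forall>s2\<in>Gam.
        (\<lambda>x. rho xi (\<lambda>y. g y (s1 y) (s2 y)) x - g x (br xi s1 x) (s2 x) - g x (s1 x) (br xi s2 x))
        = (\<lambda>x. 0))"

definition K_contact_lie_algebroid where
  "K_contact_lie_algebroid C E Gam rho br m F xi eta g \<longleftrightarrow>
     contact_riemannian_lie_algebroid C E Gam rho br m F xi eta g \<and>
     killing_section Gam rho br g xi"

end

theory Submission
  imports Defs
begin

locale sas =
  fixes C :: "('m \<Rightarrow> real) set" and E :: "'m \<Rightarrow> 'e::real_vector set"
    and Gam :: "('m \<Rightarrow> 'e) set"
    and rho :: "('m \<Rightarrow> 'e) \<Rightarrow> ('m \<Rightarrow> real) \<Rightarrow> ('m \<Rightarrow> real)"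
    and br :: "('m \<Rightarrow> 'e) \<Rightarrow> ('m \<Rightarrow> 'e) \<Rightarrow> ('m \<Rightarrow> 'e)"
    and m :: nat and F :: "'m \<Rightarrow> 'e \<Rightarrow> 'e" and xi :: "'m \<Rightarrow> 'e"
    and eta :: "'m \<Rightarrow> 'e \<Rightarrow> real" and g :: "'m \<Rightarrow> 'e \<Rightarrow> 'e \<Rightarrow> real"
  assumes S: "sasakian_lie_algebroid C E Gam rho br m F xi eta g"
begin

lemma LA: "lie_algebroid C E Gam rho br"
  using S unfolding sasakian_lie_algebroid_def contact_riemannian_lie_algebroid_def by (elim conjE) assumption
lemma AC: "almost_contact_riemannian C E Gam m F xi eta g"
  using S unfolding sasakian_lie_algebroid_def contact_riemannian_lie_algebroid_def by (elim conjE) assumption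
lemma CR: "contact_riemannian_lie_algebroid C E Gam rho br m F xi eta g"
  using S unfolding sasakian_lie_algebroid_def by (elim conjE) assumption
lemma dE_eq: "s1 \<in> Gam \<Longrightarrow> s2 \<in> Gam \<Longrightarrow> dE rho br eta s1 s2 = fundamental_form F g s1 s2"
  using CR unfolding contact_riemannian_lie_algebroid_def by (elim conjE) auto
lemma NS: "normal_structure Gam rho br F xi eta"
  using S unfolding sasakian_lie_algebroid_def by (elim conjE) assumption

lemma Cconst_q: "\<forall>c. (\<lambda>x. c) \<in> C"
  using LA unfolding lie_algebroid_def by (elim conjE) assumption
lemmas Cconst = Cconst_q[rule_format]
lemma CaM_q: "\<forall>f\<in>C. \<forall>h\<in>C. (\<lambda>x. f x + h x) \<in> C \<and> (\<lambda>x. f x * h x) \<in> C"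
  using LA unfolding lie_algebroid_def by (elim conjE) assumption
lemma Cadd: "f \<in> C \<Longrightarrow> h \<in> C \<Longrightarrow> (\<lambda>x. f x + h x) \<in> C" using CaM_q by blast
lemma Cmul: "f \<in> C \<Longrightarrow> h \<in> C \<Longrightarrow> (\<lambda>x. f x * h x) \<in> C" using CaM_q by blast
lemma sub_q: "\<forall>x. subspace (E x)"
  using LA unfolding lie_algebroid_def by (elim conjE) assumption
lemmas sub = sub_q[rule_format]
lemma secE_q: "\<forall>s\<in>Gam. \<forall>x. s x \<in> E x"
  using LA unfolding lie_algebroid_def by (elim conjE) assumption
lemmas secE = secE_q[rule_format]
lemma zeroG_q: "(\<lambda>x. 0) \<in> Gam"
  using LA unfolding lie_algebroid_def by (elim conjE) assumption
lemmas zeroG = zeroG_q[rule_format]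
lemma rhoC_q: "\<forall>s\<in>Gam. \<forall>f\<in>C. rho s f \<in> C"
  using LA unfolding lie_algebroid_def by (elim conjE) assumption
lemmas rhoC = rhoC_q[rule_format]
lemma rho_add_q: "\<forall>s\<in>Gam. \<forall>f\<in>C. \<forall>h\<in>C. rho s (\<lambda>x. f x + h x) = (\<lambda>x. rho s f x + rho s h x)"
  using LA unfolding lie_algebroid_def by (elim conjE) assumption
lemmas rho_add = rho_add_q[rule_format]
lemma rho_scal_q: "\<forall>s\<in>Gam. \<forall>f\<in>C. \<forall>c. rho s (\<lambda>x. c * f x) = (\<lambda>x. c * rho s f x)"
  using LA unfolding lie_algebroid_def by (elim conjE) assumption
lemmas rho_scal = rho_scal_q[rule_format]
lemma rho_mul_q: "\<forall>s\<in>Gam. \<forall>f\<in>C. \<forall>h\<in>C. rho s (\<lambda>x. f x * h x) = (\<lambda>x. f x * rho s h x + h x * rho s f x)"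
  using LA unfolding lie_algebroid_def by (elim conjE) assumption
lemmas rho_mul = rho_mul_q[rule_format]
lemma brG_q: "\<forall>s\<in>Gam. \<forall>t\<in>Gam. br s t \<in> Gam"
  using LA unfolding lie_algebroid_def by (elim conjE) assumption
lemmas brG = brG_q[rule_format]
lemma br_scal_q: "\<forall>s\<in>Gam. \<forall>t\<in>Gam. \<forall>c. br s (\<lambda>x. c *\<^sub>R t x) = (\<lambda>x. c *\<^sub>R br s t x)"
  using LA unfolding lie_algebroid_def by (elim conjE) assumption
lemmas br_scal = br_scal_q[rule_format]
lemma br_anti_q: "\<forall>s\<in>Gam. \<forall>t\<in>Gam. br s t = (\<lambda>x. - br t s x)"
  using LA unfolding lie_algebroid_def by (elim conjE) assumption
lemmas br_anti = br_anti_q[rule_format]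
lemma jac_q: "\<forall>s\<in>Gam. \<forall>t\<in>Gam. \<forall>u\<in>Gam.
        (\<lambda>x. br s (br t u) x + br t (br u s) x + br u (br s t) x) = (\<lambda>x. 0)"
  using LA unfolding lie_algebroid_def by (elim conjE) assumption
lemmas jac = jac_q[rule_format]
lemma rho_br_q: "\<forall>s\<in>Gam. \<forall>t\<in>Gam. \<forall>f\<in>C.
        rho (br s t) f = (\<lambda>x. rho s (rho t f) x - rho t (rho s f) x)"
  using LA unfolding lie_algebroid_def by (elim conjE) assumption
lemmas rho_br = rho_br_q[rule_format]
lemma Flin0_q: "\<forall>x. lin_on (E x) (F x) \<and> F x ` E x \<subseteq> E x"
  using AC unfolding almost_contact_riemannian_def by (elim conjE) assumption
lemmas Flin0 = Flin0_q[rule_format]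
lemma FG_q: "\<forall>s\<in>Gam. endo_sec F s \<in> Gam"
  using AC unfolding almost_contact_riemannian_def by (elim conjE) assumption
lemmas FG = FG_q[rule_format]
lemma xiG_q: "xi \<in> Gam"
  using AC unfolding almost_contact_riemannian_def by (elim conjE) assumption
lemmas xiG = xiG_q[rule_format]
lemma etalin_q: "\<forall>x. lin_on (E x) (eta x)"
  using AC unfolding almost_contact_riemannian_def by (elim conjE) assumption
lemmas etalin = etalin_q[rule_format]
lemma etaC_q: "\<forall>s\<in>Gam. (\<lambda>x. eta x (s x)) \<in> C"
  using AC unfolding almost_contact_riemannian_def by (elim conjE) assumption
lemmas etaC = etaC_q[rule_format]
lemma gC_q: "\<forall>s\<in>Gam. \<forall>t\<in>Gam. (\<lambda>x. g x (s x) (t x)) \<in> C"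
  using AC unfolding almost_contact_riemannian_def by (elim conjE) assumption
lemmas gC = gC_q[rule_format]
lemma FF_q: "\<forall>x. \<forall>v\<in>E x. F x (F x v) = - v + eta x v *\<^sub>R xi x"
  using AC unfolding almost_contact_riemannian_def by (elim conjE) assumption
lemmas FF = FF_q[rule_format]
lemma etaxi_q: "\<forall>x. eta x (xi x) = 1"
  using AC unfolding almost_contact_riemannian_def by (elim conjE) assumption
lemmas etaxi = etaxi_q[rule_format]
lemma gF_q: "\<forall>x. \<forall>u\<in>E x. \<forall>v\<in>E x. g x (F x u) (F x v) = g x u v - eta x u * eta x v"
  using AC unfolding almost_contact_riemannian_def by (elim conjE) assumption
lemmas gF = gF_q[rule_format]
lemma Flin: "lin_on (E x) (F x)" using Flin0 by blast
lemma FE: "v \<in> E x \<Longrightarrow> F x v \<in> E x" using Flin0 by blast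

lemma xiE: "xi x \<in> E x" using secE xiG by blast

lemma lin_add: "lin_on V f \<Longrightarrow> u \<in> V \<Longrightarrow> v \<in> V \<Longrightarrow> f (u + v) = f u + f v"
  unfolding lin_on_def by blast
lemma lin_scal: "lin_on V f \<Longrightarrow> u \<in> V \<Longrightarrow> f (c *\<^sub>R u) = c *\<^sub>R f u"
  unfolding lin_on_def by blast
lemma lin_neg: "lin_on V f \<Longrightarrow> u \<in> V \<Longrightarrow> f (- u) = - f u"
  using lin_scal[of V f u "-1"] by simp
lemma lin_diff: "lin_on V f \<Longrightarrow> subspace V \<Longrightarrow> u \<in> V \<Longrightarrow> v \<in> V \<Longrightarrow> f (u - v) = f u - f v"
  using lin_add[of V f u "-v"] lin_neg[of V f v] subspace_neg[of V v]
  by (simp add: subspace_neg)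
lemma lin_zero: "lin_on V f \<Longrightarrow> subspace V \<Longrightarrow> f 0 = 0"
  using lin_scal[of V f 0 0] subspace_0[of V] by simp

lemma F0: "F x 0 = 0" using lin_zero[OF Flin sub] .
lemma eta0: "eta x 0 = 0" using lin_zero[OF etalin sub] .

lemma Fxi: "F x (xi x) = 0"
proof -
  have a: "F x (F x (xi x)) = 0" using FF[OF xiE] etaxi by simp
  have "F x (F x (F x (xi x))) = - F x (xi x) + eta x (F x (xi x)) *\<^sub>R xi x"
    using FF[OF FE[OF xiE]] .
  then have b: "F x (xi x) = eta x (F x (xi x)) *\<^sub>R xi x" using a F0 by (simp add: algebra_simps)
  obtain c where c: "F x (xi x) = c *\<^sub>R xi x" using b by blast
  have "F x (F x (xi x)) = F x (c *\<^sub>R xi x)" using c by simp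
  also have "\<dots> = c *\<^sub>R F x (xi x)" by (rule lin_scal[OF Flin xiE])
  also have "\<dots> = (c * c) *\<^sub>R xi x" using c by simp
  finally have "c * c = 0" using a etaxi eta0
    by (metis scaleR_eq_0_iff zero_neq_one)
  then show ?thesis using c by simp
qed

lemma glin_q: "\<forall>x. \<forall>u\<in>E x. lin_on (E x) (g x u)"
  using AC unfolding almost_contact_riemannian_def by (elim conjE) assumption
lemma gsym_q: "\<forall>x. \<forall>u\<in>E x. \<forall>v\<in>E x. g x u v = g x v u"
  using AC unfolding almost_contact_riemannian_def by (elim conjE) assumption
lemma g0: "w \<in> E x \<Longrightarrow> g x 0 w = 0"
proof -
  assume w: "w \<in> E x"
  have z: "(0::'e) \<in> E x" using sub subspace_0 by blast
  have "g x w 0 = 0" using lin_zero[OF glin_q[rule_format, OF w] sub] .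
  then show ?thesis using gsym_q z w by metis
qed

lemma eta_g: "v \<in> E x \<Longrightarrow> eta x v = g x (xi x) v"
proof -
  assume v: "v \<in> E x"
  have "g x (F x (xi x)) (F x v) = g x (xi x) v - eta x (xi x) * eta x v" by (rule gF[OF xiE v])
  then show ?thesis using Fxi etaxi g0[OF FE[OF v]] by simp
qed

lemma etaF: "v \<in> E x \<Longrightarrow> eta x (F x v) = 0"
proof -
  assume v: "v \<in> E x"
  have nv: "- v \<in> E x" using sub v by (simp add: subspace_neg)
  have sv: "eta x v *\<^sub>R xi x \<in> E x" using sub xiE by (simp add: subspace_scale)
  have "F x (F x (F x v)) = F x (- v + eta x v *\<^sub>R xi x)" using FF[OF v] by simp
  also have "\<dots> = - F x v" using lin_add[OF Flin nv sv] lin_neg[OF Flin v] lin_scal[OF Flin xiE] Fxi by simp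
  finally have "- F x v + eta x (F x v) *\<^sub>R xi x = - F x v" using FF[OF FE[OF v]] by simp
  then show ?thesis using etaxi by (metis add_cancel_right_right scaleR_eq_0_iff zero_neq_one eta0)
qed

lemma Fxi_sec: "endo_sec F xi = (\<lambda>x. 0)" unfolding endo_sec_def using Fxi by simp

lemma br_z1: "t \<in> Gam \<Longrightarrow> br t (\<lambda>x. 0) = (\<lambda>x. 0)"
  using br_scal[OF _ zeroG, of t 0] by simp
lemma br_z2: "t \<in> Gam \<Longrightarrow> br (\<lambda>x. 0) t = (\<lambda>x. 0)"
  using br_anti[OF zeroG, of t] br_z1 by simp

lemma rho_const: "s \<in> Gam \<Longrightarrow> rho s (\<lambda>x. c) = (\<lambda>x. 0)"
proof -
  assume s: "s \<in> Gam"
  have "rho s (\<lambda>x. 1 * 1) = (\<lambda>x. 1 * rho s (\<lambda>x. 1) x + 1 * rho s (\<lambda>x. 1) x)"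
    using rho_mul[OF s Cconst Cconst, of 1 1] by simp
  then have o: "rho s (\<lambda>x. 1) = (\<lambda>x. 0)" by (simp add: fun_eq_iff)
  have "rho s (\<lambda>x. c * 1) = (\<lambda>x. c * rho s (\<lambda>x. 1) x)" using rho_scal[OF s Cconst] .
  then show ?thesis using o by simp
qed

definition et where "et s = (\<lambda>y. eta y (s y))"

lemma dE_xi: "s \<in> Gam \<Longrightarrow> dE rho br eta xi s = (\<lambda>x. 0)"
  using dE_eq[OF xiG] unfolding fundamental_form_def
  by (simp add: eta_g[symmetric] FE secE etaF)

lemma eta_br: "s \<in> Gam \<Longrightarrow> eta x (br xi s x) = rho xi (et s) x"
proof -
  assume s: "s \<in> Gam"
  have "dE rho br eta xi s x = 0" using dE_xi[OF s] by simp
  then show ?thesis unfolding dE_def et_def using etaxi rho_const[OF s, of 1] by simp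
qed

lemma LF: "s \<in> Gam \<Longrightarrow> br xi (endo_sec F s) = endo_sec F (br xi s)"
proof
  fix x assume s: "s \<in> Gam"
  have Fs: "endo_sec F s \<in> Gam" using FG[OF s] .
  have N: "nijenhuis br F xi s x + (2 * dE rho br eta xi s x) *\<^sub>R xi x = 0"
    using NS s xiG unfolding normal_structure_def by (metis (mono_tags))
  hence N2: "F x (br xi (endo_sec F s) x) = F x (F x (br xi s x))"
    using dE_xi[OF s] unfolding nijenhuis_def Fxi_sec
    by (simp add: br_z2 br_z1 s Fs F0)
  define a where "a = br xi (endo_sec F s) x"
  define b where "b = F x (br xi s x)"
  have aE: "a \<in> E x" unfolding a_def using secE brG xiG Fs by blast
  have bE: "b \<in> E x" unfolding b_def using secE brG xiG s FE by blast
  have wE: "a - b \<in> E x" using sub aE bE by (simp add: subspace_diff)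
  have Fw: "F x (a - b) = 0" using lin_diff[OF Flin sub aE bE] N2 unfolding a_def b_def by simp
  have "eta x a = rho xi (et (endo_sec F s)) x" unfolding a_def using eta_br[OF Fs] .
  also have "et (endo_sec F s) = (\<lambda>y. 0)" unfolding et_def endo_sec_def
    using etaF secE s by simp
  finally have ea: "eta x a = 0" using rho_const[OF xiG] by simp
  have eb: "eta x b = 0" unfolding b_def using etaF secE brG xiG s by blast
  have ew: "eta x (a - b) = 0" using lin_diff[OF etalin sub aE bE] ea eb by simp
  have "F x (F x (a - b)) = - (a - b)" using FF[OF wE] ew by simp
  then have "a = b" using Fw F0 by simp
  then show "br xi (endo_sec F s) x = endo_sec F (br xi s) x"
    unfolding a_def b_def endo_sec_def by simp
qed

lemma rho_lin: "t \<in> Gam \<Longrightarrow> f \<in> C \<Longrightarrow> h \<in> C \<Longrightarrow>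
   rho t (\<lambda>x. a * f x + b * h x) = (\<lambda>x. a * rho t f x + b * rho t h x)"
proof -
  assume t: "t \<in> Gam" and f: "f \<in> C" and h: "h \<in> C"
  have af: "(\<lambda>x. a * f x) \<in> C" using Cmul[OF Cconst f] by simp
  have bh: "(\<lambda>x. b * h x) \<in> C" using Cmul[OF Cconst h] by simp
  have "rho t (\<lambda>x. a * f x + b * h x) = (\<lambda>x. rho t (\<lambda>x. a * f x) x + rho t (\<lambda>x. b * h x) x)"
    by (rule rho_add[OF t af bh])
  also have "\<dots> = (\<lambda>x. a * rho t f x + b * rho t h x)"
    by (simp only: rho_scal[OF t f] rho_scal[OF t h])
  finally show ?thesis .
qed

lemma etC: "s \<in> Gam \<Longrightarrow> et s \<in> C" unfolding et_def using etaC .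

lemma dE_alt: "dE rho br eta s1 s2 = (\<lambda>x. (1/2) * (rho s1 (et s2) x - rho s2 (et s1) x - et (br s1 s2) x))"
  unfolding dE_def et_def by simp

lemma rho_dE: assumes t: "t \<in> Gam" and f: "f \<in> C" and h: "h \<in> C" and k: "k \<in> C"
  shows "rho t (\<lambda>x. (1/2) * (f x - h x - k x)) = (\<lambda>x. (1/2) * (rho t f x - rho t h x - rho t k x))"
proof -
  have hk: "(\<lambda>x. h x + k x) \<in> C" using Cadd[OF h k] .
  have eq: "(\<lambda>x. (1/2) * (f x - h x - k x)) = (\<lambda>x. (1/2) * f x + (-1/2) * (h x + k x))"
    by (simp add: fun_eq_iff algebra_simps)
  have L: "rho t (\<lambda>x. (1/2) * f x + (-1/2) * (h x + k x)) = (\<lambda>x. (1/2) * rho t f x + (-1/2) * rho t (\<lambda>x. h x + k x) x)"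
    by (rule rho_lin[OF t f hk])
  show ?thesis unfolding eq L rho_add[OF t h k] by (simp add: fun_eq_iff algebra_simps)
qed

lemma jac2: "s1 \<in> Gam \<Longrightarrow> s2 \<in> Gam \<Longrightarrow>
  et (br xi (br s1 s2)) x = et (br (br xi s1) s2) x + et (br s1 (br xi s2)) x"
proof -
  assume s1: "s1 \<in> Gam" and s2: "s2 \<in> Gam"
  have J: "br xi (br s1 s2) x + br s1 (br s2 xi) x + br s2 (br xi s1) x = 0"
    using jac[OF xiG s1 s2] by (metis (mono_tags))
  have x1: "br s2 xi = (\<lambda>x. (-1) *\<^sub>R br xi s2 x)" using br_anti[OF s2 xiG] by simp
  have "br s1 (br s2 xi) x = - br s1 (br xi s2) x"
    unfolding x1 using br_scal[OF s1 brG[OF xiG s2], of "-1"] by simp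
  moreover have "br s2 (br xi s1) x = - br (br xi s1) s2 x"
    using br_anti[OF s2 brG[OF xiG s1]] by simp
  ultimately have "br xi (br s1 s2) x = br (br xi s1) s2 x + br s1 (br xi s2) x"
    using J by (simp add: algebra_simps)
  then show ?thesis unfolding et_def
    using lin_add[OF etalin secE[OF brG[OF brG[OF xiG s1] s2]] secE[OF brG[OF s1 brG[OF xiG s2]]]]
    by simp
qed

lemma L_dE: assumes s1: "s1 \<in> Gam" and s2: "s2 \<in> Gam"
  shows "rho xi (dE rho br eta s1 s2) x = dE rho br eta (br xi s1) s2 x + dE rho br eta s1 (br xi s2) x"
proof -
  have e1: "et s1 \<in> C" and e2: "et s2 \<in> C" using etC s1 s2 by auto
  have eb: "et (br s1 s2) \<in> C" using etC brG s1 s2 by auto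
  have A: "rho xi (dE rho br eta s1 s2) x =
    (1/2) * (rho xi (rho s1 (et s2)) x - rho xi (rho s2 (et s1)) x - rho xi (et (br s1 s2)) x)"
    unfolding dE_alt using rho_dE[OF xiG rhoC[OF s1 e2] rhoC[OF s2 e1] eb] by simp
  have b1: "et (br xi s1) = rho xi (et s1)" using eta_br[OF s1] unfolding et_def by auto
  have b2: "et (br xi s2) = rho xi (et s2)" using eta_br[OF s2] unfolding et_def by auto
  have b3: "et (br xi (br s1 s2)) x = rho xi (et (br s1 s2)) x" using eta_br[OF brG[OF s1 s2]] unfolding et_def by auto
  have r1: "rho (br xi s1) (et s2) x = rho xi (rho s1 (et s2)) x - rho s1 (rho xi (et s2)) x"
    using rho_br[OF xiG s1 e2] by simp
  have r2: "rho (br xi s2) (et s1) x = rho xi (rho s2 (et s1)) x - rho s2 (rho xi (et s1)) x"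
    using rho_br[OF xiG s2 e1] by simp
  show ?thesis unfolding A unfolding dE_alt using jac2[OF s1 s2, of x] b1 b2 b3 r1 r2
    by (simp add: algebra_simps)
qed

lemma killing: "killing_section Gam rho br g xi"
  unfolding killing_section_def
proof (intro ballI ext)
  fix s1 s2 x assume s1: "s1 \<in> Gam" and s2: "s2 \<in> Gam"
  have gd: "\<And>t1 t2 y. t1 \<in> Gam \<Longrightarrow> t2 \<in> Gam \<Longrightarrow>
      g y (t1 y) (t2 y) = dE rho br eta (endo_sec F t1) t2 y + et t1 y * et t2 y"
    using dE_eq FG unfolding fundamental_form_def endo_sec_def et_def
    by (simp add: gF secE)
  have Fs1: "endo_sec F s1 \<in> Gam" using FG[OF s1] .
  have dC: "dE rho br eta (endo_sec F s1) s2 \<in> C"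
    unfolding dE_eq[OF Fs1 s2] fundamental_form_def using gC[OF Fs1 FG[OF s2]]
    unfolding endo_sec_def by simp
  have e1: "et s1 \<in> C" and e2: "et s2 \<in> C" using etC s1 s2 by auto
  have "(\<lambda>y. g y (s1 y) (s2 y)) = (\<lambda>y. dE rho br eta (endo_sec F s1) s2 y + (\<lambda>y. et s1 y * et s2 y) y)"
    using gd[OF s1 s2] by simp
  then have R: "rho xi (\<lambda>y. g y (s1 y) (s2 y)) x = rho xi (dE rho br eta (endo_sec F s1) s2) x
        + (et s1 x * rho xi (et s2) x + et s2 x * rho xi (et s1) x)"
    using rho_add[OF xiG dC Cmul[OF e1 e2]] rho_mul[OF xiG e1 e2] by simp
  have G1: "g x (br xi s1 x) (s2 x) = dE rho br eta (br xi (endo_sec F s1)) s2 x + rho xi (et s1) x * et s2 x"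
    using gd[OF brG[OF xiG s1] s2, of x] LF[OF s1] eta_br[OF s1] unfolding et_def by simp
  have G2: "g x (s1 x) (br xi s2 x) = dE rho br eta (endo_sec F s1) (br xi s2) x + et s1 x * rho xi (et s2) x"
    using gd[OF s1 brG[OF xiG s2], of x] eta_br[OF s2] unfolding et_def by simp
  show "rho xi (\<lambda>y. g y (s1 y) (s2 y)) x - g x (br xi s1 x) (s2 x) - g x (s1 x) (br xi s2 x) = 0"
    unfolding R G1 G2 using L_dE[OF Fs1 s2, of x] by (simp add: algebra_simps)
qed

end

theorem theorem4p2:
  fixes C :: "('m \<Rightarrow> real) set" and E :: "'m \<Rightarrow> 'e::real_vector set"
    and Gam :: "('m \<Rightarrow> 'e) set"
    and rho :: "('m \<Rightarrow> 'e) \<Rightarrow> ('m \<Rightarrow> real) \<Rightarrow> ('m \<Rightarrow> real)"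
    and br :: "('m \<Rightarrow> 'e) \<Rightarrow> ('m \<Rightarrow> 'e) \<Rightarrow> ('m \<Rightarrow> 'e)"
    and m :: nat and F :: "'m \<Rightarrow> 'e \<Rightarrow> 'e" and xi :: "'m \<Rightarrow> 'e"
    and eta :: "'m \<Rightarrow> 'e \<Rightarrow> real" and g :: "'m \<Rightarrow> 'e \<Rightarrow> 'e \<Rightarrow> real"
  assumes "sasakian_lie_algebroid C E Gam rho br m F xi eta g"
  shows "K_contact_lie_algebroid C E Gam rho br m F xi eta g"
proof -
  interpret sas C E Gam rho br m F xi eta g using assms by unfold_locales
  show ?thesis unfolding K_contact_lie_algebroid_def using CR killing by blast
qed

end
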